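(* Let $f_0$ be a probability density on a sample space $\mathcal{X}$ and let $\mathcal{X}_n=\{x_1,\dots,x_n\}$ be drawn independently from $f_0$. Let $\mathcal{F}$ be the space of densities on $\mathcal{X}$, let $\Pi(\mathcal{X}_n)$ be the (finite) set of sub-partitions of $\mathcal{X}_n$, and let $\psi,\tilde\psi:\mathcal{F}\to\Pi(\mathcal{X}_n)$ be maps (possibly depending on $\mathcal{X}_n$ and $n$). Let $P_M(\cdot\mid\mathcal{X}_n)$ be the posterior distribution of $f\in\mathcal{F}$ under a Bayesian model $M$, and let $$\hat{\mathbf{C}}\in\operatorname*{argmin}_{\mathbf{C}\in\Pi(\mathcal{X}_n)} E_{f\sim P_M(\cdot\mid\mathcal{X}_n)}\big[D\{\tilde\psi(f),\mathbf{C}\}\big].$$ Assume: (A1) $D:\Pi(\mathcal{X}_n)\times\Pi(\mathcal{X}_n)\to[0,1]$ is a metric; (A2) there is a metric $\rho$ on $\mathcal{F}$ and a non-negative sequence $\epsilon_n\to 0$ such that for every non-negative sequence $K_n\to\infty$, $P_M\big(f:\rho(f,f_0)\ge \epsilon_n K_n\mid\mathcal{X}_n\big)\to 0$ in probability as $n\to\infty$; (A3) there is a non-negative sequence $K_n\to\infty$ such that $\tau_2(\mathcal{X}_n):=\sup_{f\in\mathcal{F}:\rho(f,f_0)\le K_n\epsilon_n} D\{\tilde\psi(f),\psi(f_0)\}\to 0$ in probability as $n\to\infty$, with $\rho,\epsilon_n$ as in (A2). Let $\tau_1(\mathcal{X}_n):=P_M\big(f:\rho(f,f_0)\ge \epsilon_n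 K_n\mid\mathcal{X}_n\big)$ with $K_n$ the sequence from (A3). Then $$0\le D\{\hat{\mathbf{C}},\psi(f_0)\}\le 2\tau_1(\mathcal{X}_n)+2\tau_2(\mathcal{X}_n)\to 0\quad\text{in probability as } n\to\infty.$$
   Context: A sub-partition of a finite set $\mathcal{X}_n$ is a collection $\{C_1,\dots,C_k\}$ ($k\ge 0$) of non-empty, pairwise disjoint subsets of $\mathcal{X}_n$ (their union may be a proper subset of $\mathcal{X}_n$; points not in the union are called noise/inactive points). Convergence in probability of random variables $X_n\to 0$ means $\Pr(|X_n|>\epsilon)\to 0$ for every fixed $\epsilon>0$. *)

theory Defs
  imports "HOL-Probability.Probability"
begin

definition subpartition :: "'x set \<Rightarrow> 'x set set \<Rightarrow> bool" where
  "subpartition A C \<longleftrightarrow> (\<forall>c\<in>C. c \<noteq> {} \<and> c \<subseteq> A) \<and> disjoint C"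

definition subpartitions :: "'x set \<Rightarrow> 'x set set set" where
  "subpartitions A = {C. subpartition A C}"

definition metric_on :: "'a set \<Rightarrow> ('a \<Rightarrow> 'a \<Rightarrow> real) \<Rightarrow> bool" where
  "metric_on S d \<longleftrightarrow>
     (\<forall>x\<in>S. \<forall>y\<in>S. 0 \<le> d x y \<and> (d x y = 0 \<longleftrightarrow> x = y) \<and> d x y = d y x) \<and>
     (\<forall>x\<in>S. \<forall>y\<in>S. \<forall>z\<in>S. d x z \<le> d x y + d y z)"

definition densities :: "'x measure \<Rightarrow> ('x \<Rightarrow> real) set" where
  "densities M = {f. f \<in> borel_measurable M \<and> (\<forall>x\<in>space M. 0 \<le> f x) \<and>
                      (\<integral>\<^sup>+ x. ennreal (f x) \<partial>M) = 1}"

definition conv_prob_zero :: "'o measure \<Rightarrow> (nat \<Rightarrow> 'o \<Rightarrow> real) \<Rightarrow> bool" where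
  "conv_prob_zero P Y \<longleftrightarrow> (\<forall>n. Y n \<in> borel_measurable P) \<and>
     (\<forall>e>0. (\<lambda>n. measure P {\<omega> \<in> space P. \<bar>Y n \<omega>\<bar> > e}) \<longlonglongrightarrow> 0)"

definition sample :: "(nat \<Rightarrow> 'o \<Rightarrow> 'x) \<Rightarrow> nat \<Rightarrow> 'o \<Rightarrow> 'x list" where
  "sample X n \<omega> = map (\<lambda>i. X i \<omega>) [0..<n]"

end

theory Submission
  imports Defs
begin

theorem theorem1:
  fixes P :: "'o measure" and M :: "'x measure"
    and X :: "nat \<Rightarrow> 'o \<Rightarrow> 'x"
    and f0 :: "'x \<Rightarrow> real"
    and Post :: "nat \<Rightarrow> 'x list \<Rightarrow> ('x \<Rightarrow> real) measure"
    and \<psi> \<psi>t :: "nat \<Rightarrow> 'x list \<Rightarrow> ('x \<Rightarrow> real) \<Rightarrow> 'x set set"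
    and D :: "nat \<Rightarrow> 'x list \<Rightarrow> 'x set set \<Rightarrow> 'x set set \<Rightarrow> real"
    and Chat :: "nat \<Rightarrow> 'x list \<Rightarrow> 'x set set"
    and \<rho> :: "('x \<Rightarrow> real) \<Rightarrow> ('x \<Rightarrow> real) \<Rightarrow> real"
    and \<epsilon> K :: "nat \<Rightarrow> real"
  assumes P: "prob_space P"
    and f0: "f0 \<in> densities M"
    and iid: "prob_space.indep_vars P (\<lambda>_. M) X UNIV"
    and distr: "\<And>i. distributed P M (X i) (\<lambda>x. ennreal (f0 x))"
    \<comment> \<open>posterior: a probability measure on the space of densities, for each data set\<close>
    and post_prob: "\<And>n xs. length xs = n \<Longrightarrow> prob_space (Post n xs)"
    and post_space: "\<And>n xs. length xs = n \<Longrightarrow> space (Post n xs) = densities M"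
    and psi: "\<And>n xs f. length xs = n \<Longrightarrow> f \<in> densities M \<Longrightarrow> \<psi> n xs f \<in> subpartitions (set xs)"
    and psit: "\<And>n xs f. length xs = n \<Longrightarrow> f \<in> densities M \<Longrightarrow> \<psi>t n xs f \<in> subpartitions (set xs)"
    \<comment> \<open>measurability needed for the posterior expectations / probabilities to make sense\<close>
    and meas_D: "\<And>n xs C. length xs = n \<Longrightarrow> C \<in> subpartitions (set xs) \<Longrightarrow>
                   (\<lambda>f. D n xs (\<psi>t n xs f) C) \<in> borel_measurable (Post n xs)"
    and meas_rho: "\<And>n xs. length xs = n \<Longrightarrow> (\<lambda>f. \<rho> f f0) \<in> borel_measurable (Post n xs)"
    \<comment> \<open>\<hat>C is a posterior-expected-loss minimiser\<close>
    and Chat_in: "\<And>n xs. length xs = n \<Longrightarrow> Chat n xs \<in> subpartitions (set xs)"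
    and Chat_min: "\<And>n xs C. length xs = n \<Longrightarrow> C \<in> subpartitions (set xs) \<Longrightarrow>
         (\<integral>f. D n xs (\<psi>t n xs f) (Chat n xs) \<partial>Post n xs) \<le> (\<integral>f. D n xs (\<psi>t n xs f) C \<partial>Post n xs)"
    \<comment> \<open>(A1)\<close>
    and A1_metric: "\<And>n xs. length xs = n \<Longrightarrow> metric_on (subpartitions (set xs)) (D n xs)"
    and A1_range: "\<And>n xs C C'. length xs = n \<Longrightarrow> C \<in> subpartitions (set xs) \<Longrightarrow>
                     C' \<in> subpartitions (set xs) \<Longrightarrow> D n xs C C' \<in> {0..1}"
    \<comment> \<open>(A2)\<close>
    and rho_metric: "metric_on (densities M) \<rho>"
    and eps_nonneg: "\<And>n. 0 \<le> \<epsilon> n"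
    and eps_lim: "\<epsilon> \<longlonglongrightarrow> 0"
    and A2: "\<And>L. (\<forall>n. 0 \<le> L n) \<Longrightarrow> filterlim L at_top sequentially \<Longrightarrow>
         conv_prob_zero P (\<lambda>n \<omega>. measure (Post n (sample X n \<omega>))
             {f \<in> space (Post n (sample X n \<omega>)). \<rho> f f0 \<ge> \<epsilon> n * L n})"
    \<comment> \<open>(A3)\<close>
    and K_nonneg: "\<And>n. 0 \<le> K n"
    and K_lim: "filterlim K at_top sequentially"
    and A3: "conv_prob_zero P (\<lambda>n \<omega>.
         (SUP f \<in> {f \<in> densities M. \<rho> f f0 \<le> K n * \<epsilon> n}.
             D n (sample X n \<omega>) (\<psi>t n (sample X n \<omega>) f) (\<psi> n (sample X n \<omega>) f0)))"
  shows "(\<forall>n. \<forall>\<omega>\<in>space P.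
            0 \<le> D n (sample X n \<omega>) (Chat n (sample X n \<omega>)) (\<psi> n (sample X n \<omega>) f0) \<and>
            D n (sample X n \<omega>) (Chat n (sample X n \<omega>)) (\<psi> n (sample X n \<omega>) f0)
              \<le> 2 * measure (Post n (sample X n \<omega>))
                      {f \<in> space (Post n (sample X n \<omega>)). \<rho> f f0 \<ge> \<epsilon> n * K n}
                + 2 * (SUP f \<in> {f \<in> densities M. \<rho> f f0 \<le> K n * \<epsilon> n}.
                      D n (sample X n \<omega>) (\<psi>t n (sample X n \<omega>) f) (\<psi> n (sample X n \<omega>) f0)))
         \<and> conv_prob_zero P (\<lambda>n \<omega>.
              2 * measure (Post n (sample X n \<omega>))
                      {f \<in> space (Post n (sample X n \<omega>)). \<rho> f f0 \<ge> \<epsilon> n * K n}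
              + 2 * (SUP f \<in> {f \<in> densities M. \<rho> f f0 \<le> K n * \<epsilon> n}.
                      D n (sample X n \<omega>) (\<psi>t n (sample X n \<omega>) f) (\<psi> n (sample X n \<omega>) f0)))"
proof -
  have f0d: "f0 \<in> densities M" by (rule f0)
  have rho00: "\<rho> f0 f0 = 0" using rho_metric f0d unfolding metric_on_def by blast
  define T1 where "T1 = (\<lambda>n \<omega>. measure (Post n (sample X n \<omega>))
                      {f \<in> space (Post n (sample X n \<omega>)). \<rho> f f0 \<ge> \<epsilon> n * K n})"
  define T2 where "T2 = (\<lambda>n \<omega>. (SUP f \<in> {f \<in> densities M. \<rho> f f0 \<le> K n * \<epsilon> n}.
                      D n (sample X n \<omega>) (\<psi>t n (sample X n \<omega>) f) (\<psi> n (sample X n \<omega>) f0)))"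
  have pw: "0 \<le> D n xs (Chat n xs) (\<psi> n xs f0) \<and>
            D n xs (Chat n xs) (\<psi> n xs f0)
              \<le> 2 * measure (Post n xs) {f \<in> space (Post n xs). \<rho> f f0 \<ge> \<epsilon> n * K n}
                + 2 * (SUP f \<in> {f \<in> densities M. \<rho> f f0 \<le> K n * \<epsilon> n}.
                      D n xs (\<psi>t n xs f) (\<psi> n xs f0))"
    if len: "length xs = n" for n xs
  proof -
    define Q where "Q = Post n xs"
    interpret Q: prob_space Q unfolding Q_def using post_prob[OF len] .
    have spQ: "space Q = densities M" unfolding Q_def using post_space[OF len] .
    define S where "S = subpartitions (set xs)"
    define C0 where "C0 = \<psi> n xs f0"
    define Ch where "Ch = Chat n xs"
    define d where "d = D n xs"
    have C0S: "C0 \<in> S" unfolding C0_def S_def using psi[OF len f0d] .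
    have ChS: "Ch \<in> S" unfolding Ch_def S_def using Chat_in[OF len] .
    have met: "metric_on S d" unfolding d_def S_def using A1_metric[OF len] .
    have rng: "\<And>C C'. C \<in> S \<Longrightarrow> C' \<in> S \<Longrightarrow> 0 \<le> d C C' \<and> d C C' \<le> 1"
      unfolding d_def S_def using A1_range[OF len] by auto
    have ptS: "\<And>f. f \<in> space Q \<Longrightarrow> \<psi>t n xs f \<in> S"
      unfolding S_def spQ using psit[OF len] by auto
    define g where "g = (\<lambda>f. d (\<psi>t n xs f) C0)"
    define h where "h = (\<lambda>f. d (\<psi>t n xs f) Ch)"
    have gm: "g \<in> borel_measurable Q" unfolding g_def d_def Q_def
      using meas_D[OF len] C0S unfolding S_def by blast
    have hm: "h \<in> borel_measurable Q" unfolding h_def d_def Q_def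
      using meas_D[OF len] ChS unfolding S_def by blast
    have gb: "\<And>f. f \<in> space Q \<Longrightarrow> 0 \<le> g f \<and> g f \<le> 1" unfolding g_def using rng ptS C0S by blast
    have hb: "\<And>f. f \<in> space Q \<Longrightarrow> 0 \<le> h f \<and> h f \<le> 1" unfolding h_def using rng ptS ChS by blast
    have gi: "integrable Q g"
      by (rule Q.integrable_const_bound[where B=1]) (use gb gm in auto)
    have hi: "integrable Q h"
      by (rule Q.integrable_const_bound[where B=1]) (use hb hm in auto)
    have tri: "d Ch C0 \<le> h f + g f" if "f \<in> space Q" for f
    proof -
      have "d Ch C0 \<le> d Ch (\<psi>t n xs f) + d (\<psi>t n xs f) C0"
        using met ChS C0S ptS[OF that] unfolding metric_on_def by blast
      moreover have "d Ch (\<psi>t n xs f) = d (\<psi>t n xs f) Ch"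
        using met ChS ptS[OF that] unfolding metric_on_def by blast
      ultimately show ?thesis unfolding h_def g_def by simp
    qed
    have "d Ch C0 = (\<integral>f. d Ch C0 \<partial>Q)" by (simp add: Q.prob_space)
    also have "\<dots> \<le> (\<integral>f. h f + g f \<partial>Q)"
      by (rule integral_mono) (use tri hi gi in auto)
    also have "\<dots> = (\<integral>f. h f \<partial>Q) + (\<integral>f. g f \<partial>Q)" using hi gi by simp
    also have "(\<integral>f. h f \<partial>Q) \<le> (\<integral>f. g f \<partial>Q)"
      unfolding h_def g_def d_def Ch_def Q_def C0_def
      using Chat_min[OF len] C0S unfolding S_def C0_def by blast
    finally have main: "d Ch C0 \<le> 2 * (\<integral>f. g f \<partial>Q)" by simp
    define A where "A = {f \<in> space Q. \<rho> f f0 \<ge> \<epsilon> n * K n}"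
    define Dset where "Dset = {f \<in> densities M. \<rho> f f0 \<le> K n * \<epsilon> n}"
    define t2 where "t2 = (SUP f \<in> Dset. g f)"
    have bdd: "bdd_above (g ` Dset)"
      by (rule bdd_aboveI2[where M=1]) (use gb spQ in \<open>auto simp: Dset_def\<close>)
    have f0D: "f0 \<in> Dset" unfolding Dset_def using f0d rho00 K_nonneg eps_nonneg by simp
    have t2ge: "\<And>f. f \<in> Dset \<Longrightarrow> g f \<le> t2" unfolding t2_def using bdd by (rule cSUP_upper2) auto
    have t2nn: "0 \<le> t2" using t2ge[OF f0D] gb[of f0] f0d spQ by force
    have Am: "A \<in> sets Q" unfolding A_def using meas_rho[OF len] unfolding Q_def[symmetric]
      by measurable
    have gle: "g f \<le> indicator A f + t2" if "f \<in> space Q" for f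
    proof (cases "f \<in> A")
      case True then show ?thesis using gb[OF that] t2nn by simp
    next
      case False
      then have "f \<in> Dset" using that spQ unfolding A_def Dset_def by (auto simp: mult.commute)
      then show ?thesis using t2ge False by simp
    qed
    have "(\<integral>f. g f \<partial>Q) \<le> (\<integral>f. indicator A f + t2 \<partial>Q)"
      by (rule integral_mono) (use gi gle Am in \<open>auto intro!: Bochner_Integration.integrable_add integrable_real_indicator simp: Q.emeasure_finite top.not_eq_extremum[symmetric]\<close>)
    also have "\<dots> = measure Q A + t2"
      using Am by (subst Bochner_Integration.integral_add)
        (auto intro!: integrable_real_indicator simp: Q.emeasure_finite top.not_eq_extremum[symmetric]
           Q.prob_space Int_absorb2 sets.sets_into_space)
    finally have "(\<integral>f. g f \<partial>Q) \<le> measure Q A + t2" .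
    with main have "d Ch C0 \<le> 2 * measure Q A + 2 * t2" by simp
    moreover have "0 \<le> d Ch C0" using rng ChS C0S by blast
    ultimately show ?thesis
      unfolding d_def Ch_def C0_def t2_def g_def Dset_def A_def Q_def by simp
  qed
  have part1: "\<forall>n. \<forall>\<omega>\<in>space P.
            0 \<le> D n (sample X n \<omega>) (Chat n (sample X n \<omega>)) (\<psi> n (sample X n \<omega>) f0) \<and>
            D n (sample X n \<omega>) (Chat n (sample X n \<omega>)) (\<psi> n (sample X n \<omega>) f0)
              \<le> 2 * T1 n \<omega> + 2 * T2 n \<omega>"
  proof (intro allI ballI)
    fix n \<omega>
    have "length (sample X n \<omega>) = n" by (simp add: sample_def)
    from pw[OF this] show "0 \<le> D n (sample X n \<omega>) (Chat n (sample X n \<omega>)) (\<psi> n (sample X n \<omega>) f0) \<and>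
            D n (sample X n \<omega>) (Chat n (sample X n \<omega>)) (\<psi> n (sample X n \<omega>) f0)
              \<le> 2 * T1 n \<omega> + 2 * T2 n \<omega>" unfolding T1_def T2_def by simp
  qed
  have c1: "conv_prob_zero P T1" unfolding T1_def using A2[of K] K_nonneg K_lim by simp
  have c2: "conv_prob_zero P T2" unfolding T2_def using A3 by simp
  interpret P: prob_space P by (rule P)
  have part2: "conv_prob_zero P (\<lambda>n \<omega>. 2 * T1 n \<omega> + 2 * T2 n \<omega>)"
    unfolding conv_prob_zero_def
  proof (intro conjI allI impI)
    fix n
    show "(\<lambda>\<omega>. 2 * T1 n \<omega> + 2 * T2 n \<omega>) \<in> borel_measurable P"
      using c1 c2 unfolding conv_prob_zero_def
      by (intro borel_measurable_add borel_measurable_times borel_measurable_const) auto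
  next
    fix e :: real assume e: "e > 0"
    have l1: "(\<lambda>n. measure P {\<omega> \<in> space P. \<bar>T1 n \<omega>\<bar> > e/4}) \<longlonglongrightarrow> 0"
      using c1 e unfolding conv_prob_zero_def by (metis divide_pos_pos zero_less_numeral)
    have l2: "(\<lambda>n. measure P {\<omega> \<in> space P. \<bar>T2 n \<omega>\<bar> > e/4}) \<longlonglongrightarrow> 0"
      using c2 e unfolding conv_prob_zero_def by (metis divide_pos_pos zero_less_numeral)
    have ub: "measure P {\<omega> \<in> space P. \<bar>2 * T1 n \<omega> + 2 * T2 n \<omega>\<bar> > e}
        \<le> measure P {\<omega> \<in> space P. \<bar>T1 n \<omega>\<bar> > e/4} + measure P {\<omega> \<in> space P. \<bar>T2 n \<omega>\<bar> > e/4}"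
      for n
    proof -
      have m1: "T1 n \<in> borel_measurable P" using c1 unfolding conv_prob_zero_def by blast
      have m2: "T2 n \<in> borel_measurable P" using c2 unfolding conv_prob_zero_def by blast
      have s1: "{\<omega> \<in> space P. \<bar>T1 n \<omega>\<bar> > e/4} \<in> sets P" using m1 by measurable
      have s2: "{\<omega> \<in> space P. \<bar>T2 n \<omega>\<bar> > e/4} \<in> sets P" using m2 by measurable
      have "measure P {\<omega> \<in> space P. \<bar>2 * T1 n \<omega> + 2 * T2 n \<omega>\<bar> > e}
          \<le> measure P ({\<omega> \<in> space P. \<bar>T1 n \<omega>\<bar> > e/4} \<union> {\<omega> \<in> space P. \<bar>T2 n \<omega>\<bar> > e/4})"
        by (rule P.finite_measure_mono) (use s1 s2 e in auto)
      also have "\<dots> \<le> measure P {\<omega> \<in> space P. \<bar>T1 n \<omega>\<bar> > e/4} + measure P {\<omega> \<in> space P. \<bar>T2 n \<omega>\<bar> > e/4}" by (rule measure_Un_le) (use s1 s2 in \<open>auto simp: P.emeasure_finite top.not_eq_extremum[symmetric]\<close>)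
      finally show ?thesis .
    qed
    show "(\<lambda>n. measure P {\<omega> \<in> space P. \<bar>2 * T1 n \<omega> + 2 * T2 n \<omega>\<bar> > e}) \<longlonglongrightarrow> 0"
      by (rule tendsto_sandwich[of "\<lambda>_. 0" _ _ "\<lambda>n. measure P {\<omega> \<in> space P. \<bar>T1 n \<omega>\<bar> > e/4} + measure P {\<omega> \<in> space P. \<bar>T2 n \<omega>\<bar> > e/4}"])
         (use ub tendsto_add[OF l1 l2] in auto)
  qed
  show ?thesis using part1 part2 unfolding T1_def T2_def by simp
qed

end
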